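(* For all integers $d\geq2$, $k\geq1$ and $j\in\{0,\dots,k-1\}$, \[ \frac{1}{(j+1)\prod_{\ell=1}^{k-j}\left(1+\frac{1}{d\ell}\right)}\leq k^{-1/d}. \] *)

theory Defs
  imports Complex_Main
begin

end

theory Submission
  imports Defs
begin

lemma prodpow:
  fixes d :: nat assumes "d \<ge> 1"
  shows "(\<Prod>l = 1..m. (1 + 1 / (real d * real l))) ^ d \<ge> real m + 1"
proof (induction m)
  case 0 then show ?case by simp
next
  case (Suc m)
  have b: "1 + real d * (1 / (real d * real (Suc m))) \<le> (1 + 1 / (real d * real (Suc m))) ^ d"
    by (rule Bernoulli_inequality) (smt (verit) divide_nonneg_nonneg of_nat_0_le_iff mult_nonneg_nonneg)
  have e: "real d * (1 / (real d * real (Suc m))) = 1 / real (Suc m)" using assms by simp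
  have "(\<Prod>l = 1..Suc m. (1 + 1 / (real d * real l))) ^ d
        = (\<Prod>l = 1..m. (1 + 1 / (real d * real l))) ^ d * (1 + 1 / (real d * real (Suc m))) ^ d"
    by (simp add: power_mult_distrib)
  also have "\<dots> \<ge> (real m + 1) * (1 + 1 / real (Suc m))"
    using Suc b e by (intro mult_mono) (auto simp: add_pos_nonneg)
  moreover have "(real m + 1) * (1 + 1 / real (Suc m)) = real (Suc m) + 1"
    by (simp add: field_simps)
  ultimately show ?case by simp
qed

theorem lemma8p2:
  fixes d k j :: nat
  assumes "d \<ge> 2" and "k \<ge> 1" and "j < k"
  shows "1 / (real (j + 1) * (\<Prod>l = 1..k - j. (1 + 1 / (real d * real l))))
           \<le> real k powr (- 1 / real d)"
proof -
  define P where "P = (\<Prod>l = 1..k - j. (1 + 1 / (real d * real l)))"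
  have Ppos: "P > 0" unfolding P_def by (intro prod_pos) (auto simp: add_pos_nonneg)
  have Pd: "P ^ d \<ge> real (k - j) + 1" unfolding P_def using prodpow[of d "k-j"] assms by simp
  define x where "x = real (j+1) * P"
  have xpos: "x > 0" using Ppos x_def by simp
  have j1: "real (j+1) ^ d \<ge> real (j+1)"
    using assms power_increasing[of 1 d "real (j+1)"] by simp
  have "real k \<le> real (j+1) * (real (k - j) + 1)" proof -
    have "real j * real j \<le> real j * real k" using assms by (intro mult_left_mono) auto
    then show ?thesis using assms by (simp add: of_nat_diff algebra_simps)
  qed
  also have "\<dots> \<le> real (j+1) ^ d * P ^ d"
    using j1 Pd by (intro mult_mono) auto
  also have "\<dots> = x ^ d" by (simp add: x_def power_mult_distrib)
  finally have kx: "real k \<le> x ^ d" .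
  have "real k powr (1 / real d) \<le> (x ^ d) powr (1 / real d)"
    using kx by (intro powr_mono2) auto
  also have "\<dots> = x" using xpos assms
    by (simp add: powr_realpow[symmetric] powr_powr)
  finally have kx2: "real k powr (1 / real d) \<le> x" .
  have kp: "real k powr (1 / real d) > 0" using assms by simp
  have "1 / x \<le> 1 / real k powr (1 / real d)"
    using kx2 kp xpos by (intro divide_left_mono) auto
  also have "\<dots> = real k powr (- 1 / real d)"
    by (simp add: powr_minus_divide[symmetric])
  finally show ?thesis unfolding x_def P_def .
qed

end
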